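(* Let $1\leq k\leq n$ and let $\Lambda_1,\dots,\Lambda_d\subset\mathbb{P}^n$ be $(k-1)$-dimensional linear subspaces satisfying $\mathrm{SP}(n-k)$. Let $2\leq r\leq\min\{d-2,\,n-k+1\}$ be an integer such that for a general point $p\in\Lambda_d$ (i.e. for all $p$ in a nonempty Zariski open subset of $\Lambda_d$) one has $p\notin\Lambda_i$ for $i=1,\dots,r$, and the $(k-1)$-planes $\Gamma_i:=\pi_p(\Lambda_i)\subset\mathbb{P}^{n-1}$, $i=1,\dots,r$, satisfy $\mathrm{SP}(n-k-1)$, where $\pi_p\colon\mathbb{P}^n\dashrightarrow\mathbb{P}^{n-1}$ is the projection from $p$. Then one of the following holds: (A) $\Lambda_d\subset\mathrm{Span}(\Lambda_1,\dots,\Lambda_r)$; (B) $\Lambda_1,\dots,\Lambda_r$ satisfy $\mathrm{SP}(n-k)$.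
   Context: For $(k-1)$-dimensional linear subspaces $\Lambda_1,\dots,\Lambda_e\subset\mathbb{P}^N$ (not necessarily distinct), $\mathrm{SP}(N-k)$ means: for every $j\in\{1,\dots,e\}$ and every $(N-k)$-dimensional linear subspace $L\subset\mathbb{P}^N$ meeting each $\Lambda_i$ with $i\neq j$, $L$ also meets $\Lambda_j$. *)

theory Defs
  imports "HOL-Analysis.Analysis"
begin

text \<open>Projective space P^N over the complex numbers is modelled by the vector space
  complex^'n with CARD('n) = N+1.  A projective linear subspace of projective dimension m
  is a (complex) linear subspace of vector dimension m+1; a point is a nonzero vector.\<close>

definition pspace :: "nat \<Rightarrow> (complex^'n) set \<Rightarrow> bool" where
  "pspace m S \<longleftrightarrow> vec.subspace S \<and> vec.dim S = m + 1"

text \<open>Two projective subspaces meet iff the vector subspaces share a nonzero vector.\<close>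
definition meets :: "(complex^'n) set \<Rightarrow> (complex^'n) set \<Rightarrow> bool" where
  "meets A B \<longleftrightarrow> (\<exists>v. v \<noteq> 0 \<and> v \<in> A \<and> v \<in> B)"

text \<open>SP(m) for the family Lambda_1, ..., Lambda_e.\<close>
definition SP :: "nat \<Rightarrow> nat \<Rightarrow> (nat \<Rightarrow> (complex^'n) set) \<Rightarrow> bool" where
  "SP m e Lam \<longleftrightarrow>
     (\<forall>j\<in>{1..e}. \<forall>L. pspace m L \<and> (\<forall>i\<in>{1..e}. i \<noteq> j \<longrightarrow> meets L (Lam i))
        \<longrightarrow> meets L (Lam j))"

text \<open>Polynomial functions on complex^'n (in the coordinates).\<close>
inductive_set polyfun :: "(complex^'n \<Rightarrow> complex) set" where
  const: "(\<lambda>v. c) \<in> polyfun"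
| coord: "(\<lambda>v. v $ i) \<in> polyfun"
| add: "f \<in> polyfun \<Longrightarrow> g \<in> polyfun \<Longrightarrow> (\<lambda>v. f v + g v) \<in> polyfun"
| mult: "f \<in> polyfun \<Longrightarrow> g \<in> polyfun \<Longrightarrow> (\<lambda>v. f v * g v) \<in> polyfun"

definition homogeneous_polyfun :: "(complex^'n \<Rightarrow> complex) \<Rightarrow> bool" where
  "homogeneous_polyfun f \<longleftrightarrow> f \<in> polyfun \<and> (\<exists>d::nat. \<forall>c v. f (c *s v) = c ^ d * f v)"

text \<open>(Affine cones over) Zariski closed subsets of projective space: common zero
  loci of families of homogeneous polynomials.\<close>
definition zariski_closed :: "(complex^'n) set \<Rightarrow> bool" where
  "zariski_closed Z \<longleftrightarrow>
     (\<exists>F. (\<forall>f\<in>F. homogeneous_polyfun f) \<and> Z = {v. \<forall>f\<in>F. f v = 0})"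

text \<open>P holds for a general point of the projective subspace S: there is a nonempty
  Zariski open subset U = S - Z of S (Z Zariski closed) such that P p for all points p in U.\<close>
definition general_point :: "(complex^'n) set \<Rightarrow> (complex^'n \<Rightarrow> bool) \<Rightarrow> bool" where
  "general_point S P \<longleftrightarrow>
     (\<exists>Z. zariski_closed Z \<and> (\<exists>v\<in>S. v \<noteq> 0 \<and> v \<notin> Z) \<and>
          (\<forall>p\<in>S. p \<noteq> 0 \<and> p \<notin> Z \<longrightarrow> P p))"

text \<open>A projection from the point p onto P^{N-1} (= projective space of complex^'m,
  CARD('m) = N): a surjective linear map whose kernel is the line spanned by p.\<close>
definition projection_from :: "complex^'n \<Rightarrow> (complex^'n \<Rightarrow> complex^'m) \<Rightarrow> bool" where
  "projection_from p f \<longleftrightarrow> Vector_Spaces.linear (*s) (*s) f \<and> surj f \<and>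
     {v. f v = 0} = vec.span {p}"

end

theory Submission
  imports Defs "HOL-Computational_Algebra.Polynomial"
begin


lemma polyfun_line:
  fixes f :: "complex^'n \<Rightarrow> complex"
  assumes "f \<in> polyfun"
  shows "\<exists>P. \<forall>t. f (a + t *s b) = poly P t"
  using assms
proof induction
  case (const c) then show ?case by (intro exI[of _ "[:c:]"]) simp
next
  case (coord i) then show ?case by (intro exI[of _ "[:a$i, b$i:]"]) (simp add: algebra_simps)
next
  case (add f g)
  then obtain P Q where "\<forall>t. f (a + t *s b) = poly P t" "\<forall>t. g (a + t *s b) = poly Q t" by blast
  then show ?case by (intro exI[of _ "P + Q"]) simp
next
  case (mult f g)
  then obtain P Q where "\<forall>t. f (a + t *s b) = poly P t" "\<forall>t. g (a + t *s b) = poly Q t" by blast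
  then show ?case by (intro exI[of _ "P * Q"]) simp
qed

lemma good_point:
  fixes S W :: "(complex^'n) set"
  assumes S: "vec.subspace S" and W: "vec.subspace W"
    and Z: "zariski_closed Z" and p0: "p0 \<in> S" "p0 \<noteq> 0" "p0 \<notin> Z"
    and q: "q \<in> S" "q \<notin> W"
  shows "\<exists>p\<in>S. p \<noteq> 0 \<and> p \<notin> Z \<and> p \<notin> W"
proof -
  obtain F where F: "\<forall>f\<in>F. homogeneous_polyfun f" and Zd: "Z = {v. \<forall>f\<in>F. f v = 0}"
    using Z unfolding zariski_closed_def by blast
  obtain f where f: "f \<in> F" "f p0 \<noteq> 0" using p0(3) Zd by blast
  have "f \<in> polyfun" using F f unfolding homogeneous_polyfun_def by blast
  then obtain P where P: "\<forall>t. f (p0 + t *s q) = poly P t" using polyfun_line by blast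
  have "f (p0 + 0 *s q) = poly P 0" using P by blast
  hence "P \<noteq> 0" using f(2) by auto
  hence fin1: "finite {t. poly P t = 0}" by (rule poly_roots_finite)
  have fin2: "finite {t. p0 + t *s q \<in> W}"
  proof (rule finite_subset[of _ "{SOME t. p0 + t *s q \<in> W}"])
    show "{t. p0 + t *s q \<in> W} \<subseteq> {SOME t. p0 + t *s q \<in> W}"
    proof
      fix t assume t: "t \<in> {t. p0 + t *s q \<in> W}"
      define s where "s = (SOME t. p0 + t *s q \<in> W)"
      have s: "p0 + s *s q \<in> W" using t unfolding s_def by (metis mem_Collect_eq someI)
      have "(p0 + t *s q) - (p0 + s *s q) \<in> W" using t s W vec.subspace_diff by blast
      moreover have "(p0 + t *s q) - (p0 + s *s q) = (t - s) *s q" by (simp add: vec.scale_left_diff_distrib)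
      ultimately have d: "(t - s) *s q \<in> W" by simp
      show "t \<in> {s}"
      proof (rule ccontr)
        assume "t \<notin> {s}"
        hence "inverse (t - s) *s ((t - s) *s q) \<in> W" using d W vec.subspace_scale by blast
        moreover have "inverse (t - s) *s ((t - s) *s q) = q" using \<open>t \<notin> {s}\<close>
          by (simp only: vec.scale_scale) simp
        ultimately have "q \<in> W" by simp
        thus False using q by simp
      qed
    qed
  qed simp
  have "infinite (UNIV - ({t. poly P t = 0} \<union> {t. p0 + t *s q \<in> W}))"
    using fin1 fin2 by (simp add: infinite_UNIV_char_0 Diff_infinite_finite)
  hence "UNIV - ({t. poly P t = 0} \<union> {t. p0 + t *s q \<in> W}) \<noteq> {}" by (metis finite.emptyI)
  then obtain t where "t \<in> UNIV - ({t. poly P t = 0} \<union> {t. p0 + t *s q \<in> W})" by blast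
  hence t: "poly P t \<noteq> 0" "p0 + t *s q \<notin> W" by auto
  have "p0 + t *s q \<in> S" using S p0 q by (simp add: vec.subspace_add vec.subspace_scale)
  moreover have "p0 + t *s q \<notin> Z" using t P f Zd by (metis (mono_tags, lifting) mem_Collect_eq)
  moreover have "p0 + t *s q \<noteq> 0" using t W vec.subspace_0 by metis
  ultimately show ?thesis using t by blast
qed


lemma dim_Un_le:
  fixes A B :: "(complex^'n) set"
  assumes A: "vec.subspace A" and B: "vec.subspace B"
  shows "vec.dim (A \<union> B) \<le> vec.dim A + vec.dim B"
proof -
  have "vec.span (A \<union> B) = {x + y |x y. x \<in> A \<and> y \<in> B}"
  proof -
    have e: "vec.span A = A" "vec.span B = B" using A B vec.span_eq_iff by blast+
    show ?thesis using vec.span_Un[of A B] unfolding e .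
  qed
  hence "vec.dim (vec.span (A \<union> B)) = vec.dim {x + y |x y. x \<in> A \<and> y \<in> B}"
    by (simp only:)
  hence "vec.dim (A \<union> B) = vec.dim {x + y |x y. x \<in> A \<and> y \<in> B}"
    by (simp only: vec.dim_span)
  thus ?thesis using vec.dim_sums_Int[OF A B] by linarith
qed

lemma extend_avoid:
  fixes A B :: "(complex^'n) set"
  assumes "vec.subspace A" "vec.subspace B" "A \<inter> B \<subseteq> {0}" "vec.dim A \<le> m"
    "m + vec.dim B \<le> CARD('n)"
  shows "\<exists>L. vec.subspace L \<and> A \<subseteq> L \<and> vec.dim L = m \<and> L \<inter> B \<subseteq> {0}"
  using assms
proof (induction "m - vec.dim A" arbitrary: A)
  case 0
  then show ?case by (intro exI[of _ A]) auto
next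
  case (Suc d)
  have lt: "vec.dim A + vec.dim B < CARD('n)" using Suc by linarith
  have "vec.dim (A \<union> B) < vec.dim (UNIV :: (complex^'n) set)"
    using dim_Un_le[OF Suc(3,4)] lt by (simp add: card_cart_basis)
  hence "vec.span (A \<union> B) \<noteq> UNIV"
  proof (intro notI)
    assume a: "vec.span (A \<union> B) = UNIV"
    have "vec.dim (A \<union> B) = vec.dim (vec.span (A \<union> B))" by (simp only: vec.dim_span)
    also have "\<dots> = vec.dim (UNIV :: (complex^'n) set)" by (simp only: a)
    finally show "vec.dim (A \<union> B) < vec.dim (UNIV :: (complex^'n) set) \<Longrightarrow> False" by simp
  qed
  then obtain u where u: "u \<notin> vec.span (A \<union> B)" by blast
  define A' where "A' = vec.span (insert u A)"
  have sA': "vec.subspace A'" unfolding A'_def by simp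
  have "u \<notin> vec.span A" using u vec.span_mono[of A "A \<union> B"] by blast
  hence dA': "vec.dim A' = vec.dim A + 1" unfolding A'_def by (simp add: vec.dim_insert)
  have AA': "A \<subseteq> A'" unfolding A'_def using vec.span_superset by blast
  have int: "A' \<inter> B \<subseteq> {0}"
  proof
    fix x assume x: "x \<in> A' \<inter> B"
    then obtain c where c: "x - c *s u \<in> vec.span A" unfolding A'_def
      using vec.span_breakdown_eq by blast
    have eA: "vec.span A = A" using Suc(3) vec.span_eq_iff by blast
    have cA: "x - c *s u \<in> A" using c unfolding eA .
    show "x \<in> {0}"
    proof (cases "c = 0")
      case True
      then show ?thesis using cA x Suc(5) by auto
    next
      case False
      have "x \<in> vec.span (A \<union> B)" using x vec.span_superset by blast
      moreover have "x - c *s u \<in> vec.span (A \<union> B)" using cA vec.span_superset by blast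
      ultimately have "x - (x - c *s u) \<in> vec.span (A \<union> B)" by (rule vec.span_diff)
      hence "c *s u \<in> vec.span (A \<union> B)" by simp
      hence "inverse c *s (c *s u) \<in> vec.span (A \<union> B)" by (rule vec.span_scale)
      moreover have "inverse c *s (c *s u) = u" using False by (simp only: vec.scale_scale) simp
      ultimately show ?thesis using u by simp
    qed
  qed
  have "d = m - vec.dim A'" using Suc(2) dA' by linarith
  from Suc(1)[OF this sA' Suc(4) int] Suc(6,7) dA' Suc(2)
  obtain L where "vec.subspace L" "A' \<subseteq> L" "vec.dim L = m" "L \<inter> B \<subseteq> {0}" by fastforce
  thus ?case using AA' by blast
qed



lemma dim_image_proj:
  fixes f :: "complex^'n \<Rightarrow> complex^'m"
  assumes lin: "Vector_Spaces.linear (*s) (*s) f" and ker: "{v. f v = 0} = vec.span {p}"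
    and p: "p \<noteq> 0" "p \<in> S" and S: "vec.subspace S"
  shows "vec.dim (f ` S) + 1 = vec.dim S"
proof -
  interpret lf: Vector_Spaces.linear "(*s)" "(*s)" f by fact
  have "vec.independent {p}" using p by (simp add: vec.independent_insert)
  then obtain B where B: "{p} \<subseteq> B" "B \<subseteq> S" "vec.independent B" "S \<subseteq> vec.span B"
    using p by (meson empty_subsetI insert_subset vec.maximal_independent_subset_extend)
  have SB: "vec.span B = S" using B S vec.span_subspace by blast
  define B' where "B' = B - {p}"
  have BB: "B = insert p B'" using B by (auto simp: B'_def)
  have pB': "p \<notin> B'" by (simp add: B'_def)
  have pnot: "p \<notin> vec.span B'" and indB': "vec.independent B'"
    using B(3) pB' unfolding BB by (auto simp: vec.independent_insert)
  have finB: "finite B" using B(3) vec.finiteI_independent by blast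
  have card: "card B = card B' + 1" using finB pB' BB by (metis card_insert_disjoint finite_insert Suc_eq_plus1)
  have dimS: "vec.dim S = card B"
    using B(3) SB by (metis vec.dim_eq_card_independent vec.dim_span)
  have dimB': "vec.dim (vec.span B') = card B'"
    using indB' by (simp add: vec.dim_eq_card_independent)
  have fp: "f p = 0" using ker vec.span_base[of p "{p}"] by blast
  have img: "f ` S = f ` vec.span B'"
  proof
    show "f ` vec.span B' \<subseteq> f ` S" using SB BB vec.span_mono[of B' B] by blast
  next
    show "f ` S \<subseteq> f ` vec.span B'"
    proof
      fix y assume "y \<in> f ` S"
      then obtain x where x: "x \<in> S" "y = f x" by blast
      then obtain c where c: "x - c *s p \<in> vec.span B'"
        using SB BB vec.span_breakdown_eq by blast
      have "f (x - c *s p) = f x" by (simp add: lf.diff lf.scale fp)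
      thus "y \<in> f ` vec.span B'" using c x by (metis image_eqI)
    qed
  qed
  have inj: "inj_on f (vec.span B')"
  proof (rule inj_onI)
    fix x y assume xy: "x \<in> vec.span B'" "y \<in> vec.span B'" "f x = f y"
    hence "f (x - y) = 0" by (simp add: lf.diff)
    hence "x - y \<in> vec.span {p}" using ker by blast
    then obtain c where c: "x - y = c *s p" by (auto simp: vec.span_singleton)
    have d: "x - y \<in> vec.span B'" using xy vec.span_diff by blast
    show "x = y"
    proof (cases "c = 0")
      case True then show ?thesis using c by simp
    next
      case False
      have "inverse c *s (x - y) \<in> vec.span B'" using d by (rule vec.span_scale)
      moreover have "inverse c *s (x - y) = p" using c False by (simp only: vec.scale_scale) simp
      ultimately show ?thesis using pnot by simp
    qed
  qed
  have inj2: "inj_on f (vec.span (vec.span B'))" using inj by (simp only: vec.span_span)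
  have "vec.dim (f ` vec.span B') = vec.dim (vec.span B')"
    by (rule vec.dim_image_eq[OF lin inj2])
  hence "vec.dim (f ` S) = card B'" unfolding img using dimB' by (rule trans)
  thus ?thesis using dimS card by linarith
qed



lemma proj_exists:
  fixes p :: "complex^'n"
  assumes p: "p \<noteq> 0" and dims: "CARD('n) = CARD('m) + 1"
  shows "\<exists>f :: complex^'n \<Rightarrow> complex^'m. projection_from p f"
proof -
  have "vec.independent {p}" using p by (simp add: vec.independent_insert)
  then obtain B where B: "{p} \<subseteq> B" "vec.independent B" "UNIV \<subseteq> vec.span B"
    by (meson subset_UNIV vec.maximal_independent_subset_extend)
  have SB: "vec.span B = UNIV" using B by blast
  define B' where "B' = B - {p}"
  have BB: "B = insert p B'" using B by (auto simp: B'_def)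
  have pB': "p \<notin> B'" by (simp add: B'_def)
  have pnot: "p \<notin> vec.span B'" and indB': "vec.independent B'"
    using B(2) pB' unfolding BB by (auto simp: vec.independent_insert)
  have finB: "finite B" using B(2) vec.finiteI_independent by blast
  have finB': "finite B'" using finB by (simp add: B'_def)
  have card: "card B = card B' + 1" using finB pB' BB by (metis card_insert_disjoint finite_insert Suc_eq_plus1)
  have "card B = CARD('n)"
    using B(2) SB by (metis vec.dim_eq_card_independent vec.dim_span vec.dim_UNIV card_cart_basis)
  hence cB': "card B' = card (cart_basis :: (complex^'m) set)" using card dims by (simp add: card_cart_basis)
  then obtain h where h: "bij_betw h B' (cart_basis :: (complex^'m) set)"
    using finB' by (metis bij_betw_iff_card finite_cart_basis)
  define f where "f = vec.construct B (\<lambda>b. if b = p then 0 else h b)"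
  have lin: "Vector_Spaces.linear (*s) (*s) f" unfolding f_def by (rule vec.linear_construct[OF B(2)])
  interpret lf: Vector_Spaces.linear "(*s)" "(*s)" f by fact
  have fB: "\<And>b. b \<in> B \<Longrightarrow> f b = (if b = p then 0 else h b)"
    unfolding f_def using B(2) by (simp add: vec.construct_basis)
  have fp: "f p = 0" using fB BB by simp
  have fB': "f ` B' = cart_basis" using h fB BB pB' unfolding bij_betw_def
    by (metis (no_types, lifting) image_cong insert_iff)
  have injB': "inj_on f B'" using h fB BB pB' unfolding bij_betw_def
    by (metis (no_types, lifting) inj_on_cong insert_iff)
  have injS: "inj_on f (vec.span B')"
    using lf.inj_on_span_iff_independent_image[of B'] fB' injB' vec.independent_Basis by simp
  have surj: "surj f"
  proof -
    have "f ` UNIV = f ` vec.span B" using SB by simp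
    also have "\<dots> = vec.span (f ` B)" by (simp add: lf.span_image)
    also have "\<dots> \<supseteq> vec.span (f ` B')" using BB by (intro vec.span_mono) auto
    finally show ?thesis using fB' vec.span_Basis by auto
  qed
  have ker: "{v. f v = 0} = vec.span {p}"
  proof
    show "vec.span {p} \<subseteq> {v. f v = 0}"
      by (auto simp: vec.span_singleton lf.scale fp)
  next
    show "{v. f v = 0} \<subseteq> vec.span {p}"
    proof
      fix x assume x: "x \<in> {v. f v = 0}"
      obtain c where c: "x - c *s p \<in> vec.span B'"
        using SB BB vec.span_breakdown_eq by blast
      have "f (x - c *s p) = 0" using x by (simp add: lf.diff lf.scale fp)
      hence "f (x - c *s p) = f 0" by simp
      hence "x - c *s p = 0" using injS c vec.span_zero unfolding inj_on_def by blast
      hence "x = c *s p" by simp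
      thus "x \<in> vec.span {p}" by (auto simp: vec.span_singleton)
    qed
  qed
  show ?thesis unfolding projection_from_def using lin surj ker by blast
qed

lemma inv_scale_mem:
  fixes x :: "complex^'n"
  assumes "c \<noteq> 0" "c *s x \<in> vec.span T"
  shows "x \<in> vec.span T"
proof -
  have "inverse c *s (c *s x) \<in> vec.span T" using assms(2) by (rule vec.span_scale)
  moreover have "inverse c *s (c *s x) = x" using assms(1) by (simp only: vec.scale_scale) simp
  ultimately show ?thesis by simp
qed

theorem lemma2p14:
  fixes Lam :: "nat \<Rightarrow> (complex^'n) set"
    and n k d r :: nat
  assumes dimN: "CARD('n) = n + 1"
    and dimM: "CARD('m) = n"
    and k1: "1 \<le> k" and kn: "k \<le> n"
    and Lam_sub: "\<forall>i\<in>{1..d}. pspace (k - 1) (Lam i)"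
    and SP_all: "SP (n - k) d Lam"
    and r2: "2 \<le> r" and rd: "r \<le> d - 2" and rnk: "r \<le> n - k + 1"
    and gen: "general_point (Lam d)
       (\<lambda>p. (\<forall>i\<in>{1..r}. p \<notin> Lam i) \<and>
            (\<forall>f :: complex^'n \<Rightarrow> complex^'m. projection_from p f \<longrightarrow>
               SP (n - k - 1) r (\<lambda>i. f ` Lam i)))"
  shows "Lam d \<subseteq> vec.span (\<Union>i\<in>{1..r}. Lam i) \<or> SP (n - k) r Lam"
proof -
  have nk: "1 \<le> n - k" using r2 rnk by linarith
  define W where "W = vec.span (\<Union>i\<in>{1..r}. Lam i)"
  have sW: "vec.subspace W" unfolding W_def by simp
  have LamW: "\<And>i. i \<in> {1..r} \<Longrightarrow> Lam i \<subseteq> W" unfolding W_def using vec.span_superset by blast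
  have subLam: "\<And>i. i \<in> {1..r} \<Longrightarrow> vec.subspace (Lam i) \<and> vec.dim (Lam i) = k"
  proof -
    fix i assume "i \<in> {1..r}"
    hence "i \<in> {1..d}" using rd by auto
    thus "vec.subspace (Lam i) \<and> vec.dim (Lam i) = k" using Lam_sub k1 unfolding pspace_def by auto
  qed
  show ?thesis
  proof (cases "Lam d \<subseteq> W")
    case True
    thus ?thesis unfolding W_def by blast
  next
    case notA: False
    then obtain q where q: "q \<in> Lam d" "q \<notin> W" by blast
    have "d \<in> {1..d}" using rd r2 by auto
    hence sLd: "vec.subspace (Lam d)" using Lam_sub unfolding pspace_def by auto
    obtain Z where Z: "zariski_closed Z" "\<exists>v\<in>Lam d. v \<noteq> 0 \<and> v \<notin> Z"
      "\<forall>p\<in>Lam d. p \<noteq> 0 \<and> p \<notin> Z \<longrightarrow> (\<forall>i\<in>{1..r}. p \<notin> Lam i) \<and>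
            (\<forall>f :: complex^'n \<Rightarrow> complex^'m. projection_from p f \<longrightarrow>
               SP (n - k - 1) r (\<lambda>i. f ` Lam i))"
      using gen unfolding general_point_def by blast
    obtain p0 where p0: "p0 \<in> Lam d" "p0 \<noteq> 0" "p0 \<notin> Z" using Z(2) by blast
    obtain p where p: "p \<in> Lam d" "p \<noteq> 0" "p \<notin> Z" "p \<notin> W"
      using good_point[OF sLd sW Z(1) p0 q] by blast
    have pLam: "\<forall>i\<in>{1..r}. p \<notin> Lam i"
      and SPp: "\<forall>f :: complex^'n \<Rightarrow> complex^'m. projection_from p f \<longrightarrow>
               SP (n - k - 1) r (\<lambda>i. f ` Lam i)" using Z(3) p by auto
    obtain f :: "complex^'n \<Rightarrow> complex^'m" where f: "projection_from p f"
      using proj_exists[OF p(2)] dimN dimM by auto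
    have SPf: "SP (n - k - 1) r (\<lambda>i. f ` Lam i)" using SPp f by blast
    have lin: "Vector_Spaces.linear (*s) (*s) f" and ker: "{v. f v = 0} = vec.span {p}"
      using f unfolding projection_from_def by auto
    interpret lf: Vector_Spaces.linear "(*s)" "(*s)" f by fact
    have fp: "f p = 0" using ker vec.span_base[of p "{p}"] by blast
    have kerD: "\<And>x. f x = 0 \<Longrightarrow> \<exists>c. x = c *s p" using ker by (auto simp: vec.span_singleton)
    have "SP (n - k) r Lam" unfolding SP_def
    proof (intro ballI allI impI)
      fix j L assume j: "j \<in> {1..r}" and L: "pspace (n - k) L \<and> (\<forall>i\<in>{1..r}. i \<noteq> j \<longrightarrow> meets L (Lam i))"
      have sL: "vec.subspace L" using L unfolding pspace_def by auto
      have sLj: "vec.subspace (Lam j)" and dLj: "vec.dim (Lam j) = k" using subLam[OF j] by auto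
      show "meets L (Lam j)"
      proof (rule ccontr)
        assume nm: "\<not> meets L (Lam j)"
        hence LLj: "L \<inter> Lam j \<subseteq> {0}" unfolding meets_def by auto
        define v where "v = (\<lambda>i. SOME v. v \<noteq> 0 \<and> v \<in> L \<and> v \<in> Lam i)"
        have v: "\<And>i. i \<in> {1..r} - {j} \<Longrightarrow> v i \<noteq> 0 \<and> v i \<in> L \<and> v i \<in> Lam i"
        proof -
          fix i assume i: "i \<in> {1..r} - {j}"
          hence "\<exists>v. v \<noteq> 0 \<and> v \<in> L \<and> v \<in> Lam i" using L unfolding meets_def by auto
          thus "v i \<noteq> 0 \<and> v i \<in> L \<and> v i \<in> Lam i" unfolding v_def by (rule someI_ex)
        qed
        define S where "S = v ` ({1..r} - {j})"
        have finS: "finite S" unfolding S_def by simp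
        have "card ({1..r} - {j}) = r - 1" using j by simp
        hence cardS: "card S \<le> r - 1" unfolding S_def by (metis card_image_le finite_Diff finite_atLeastAtMost)
        define A where "A = vec.span (insert p S)"
        have sA: "vec.subspace A" unfolding A_def by simp
        have "vec.dim A \<le> card (insert p S)" unfolding A_def
          by (rule vec.dim_le_card) (auto simp: finS)
        also have "\<dots> \<le> card S + 1" using finS by (simp add: card_insert_if)
        finally have dimA: "vec.dim A \<le> n - k + 1" using cardS rnk r2 by linarith
        have SL: "S \<subseteq> L" unfolding S_def using v by blast
        have spSL: "vec.span S \<subseteq> L" using vec.span_minimal[OF SL sL] .
        have SW: "S \<subseteq> W" unfolding S_def using v LamW by blast
        have spSW: "vec.span S \<subseteq> W" using vec.span_minimal[OF SW sW] .
        have ALj: "A \<inter> Lam j \<subseteq> {0}"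
        proof
          fix x assume x: "x \<in> A \<inter> Lam j"
          then obtain c where c: "x - c *s p \<in> vec.span S" unfolding A_def
            using vec.span_breakdown_eq by blast
          show "x \<in> {0}"
          proof (cases "c = 0")
            case True
            then show ?thesis using c spSL x LLj by auto
          next
            case False
            have "x \<in> W" using x LamW[OF j] by blast
            moreover have "x - c *s p \<in> W" using c spSW by blast
            ultimately have "x - (x - c *s p) \<in> W" using sW vec.subspace_diff by blast
            hence "c *s p \<in> W" by simp
            hence "c *s p \<in> vec.span W" by (rule vec.span_base)
            hence "p \<in> vec.span W" using False inv_scale_mem by blast
            hence "p \<in> W" using sW vec.span_eq_iff by blast
            thus ?thesis using p(4) by simp
          qed
        qed
        obtain L' where L': "vec.subspace L'" "A \<subseteq> L'" "vec.dim L' = n - k + 1" "L' \<inter> Lam j \<subseteq> {0}"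
          using extend_avoid[OF sA sLj ALj dimA] dLj dimN kn by auto
        have pA: "p \<in> A" unfolding A_def by (simp add: vec.span_base)
        have pL': "p \<in> L'" using pA L'(2) by blast
        have SL': "S \<subseteq> L'" using L'(2) vec.span_superset unfolding A_def by blast
        have "vec.dim (f ` L') + 1 = vec.dim L'" by (rule dim_image_proj[OF lin ker p(2) pL' L'(1)])
        hence dfL': "vec.dim (f ` L') = n - k - 1 + 1" using L'(3) nk by linarith
        have psp: "pspace (n - k - 1) (f ` L')" unfolding pspace_def
          using lf.subspace_image[OF L'(1)] dfL' by simp
        have others: "\<forall>i\<in>{1..r}. i \<noteq> j \<longrightarrow> meets (f ` L') (f ` Lam i)"
        proof (intro ballI impI)
          fix i assume i: "i \<in> {1..r}" "i \<noteq> j"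
          hence vi: "v i \<noteq> 0" "v i \<in> L'" "v i \<in> Lam i" using v SL' unfolding S_def by auto
          have "f (v i) \<noteq> 0"
          proof
            assume "f (v i) = 0"
            then obtain c where c: "v i = c *s p" using kerD by blast
            hence c0: "c \<noteq> 0" using vi by auto
            have "c *s p \<in> vec.span (Lam i)" using vi c vec.span_base by metis
            hence "p \<in> vec.span (Lam i)" using c0 inv_scale_mem by blast
            hence "p \<in> Lam i" using subLam[OF i(1)] vec.span_eq_iff by blast
            thus False using pLam i by blast
          qed
          thus "meets (f ` L') (f ` Lam i)" unfolding meets_def using vi by blast
        qed
        have "meets (f ` L') (f ` Lam j)"
          using SPf j psp others unfolding SP_def by blast
        then obtain w l lj where w: "w \<noteq> 0" "l \<in> L'" "w = f l" "lj \<in> Lam j" "w = f lj"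
          unfolding meets_def by blast
        have "f (l - lj) = 0" using w by (simp add: lf.diff)
        then obtain c where c: "l - lj = c *s p" using kerD by blast
        have "lj = l - c *s p" using c by (simp add: algebra_simps)
        hence "lj \<in> L'" using w(2) pL' L'(1) by (simp add: vec.subspace_diff vec.subspace_scale)
        hence "lj = 0" using w(4) L'(4) by blast
        thus False using w by (simp add: lf.zero)
      qed
    qed
    thus ?thesis by blast
  qed
qed

end
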